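(* Let $K$ be a perfect field of characteristic $p>0$, let $R=K[x]$, and let $\mathcal{D}$ be the ring of $K$-linear differential operators on $R$. Let $M=R\oplus R$ be the $\mathcal{D}$-module defined as in the context with $g_r=x^{p^r+p^{2r}}$ for all $r\geq 0$. Then $M$ is not holonomic.
   Context: Differential operators: for $t\geq 0$ let $\partial_t=D_t:R\to R$ be the $K$-linear map sending $x^v$ to $\binom{v}{t}x^{v-t}$ (so $\partial_0$ is the identity). The ring $\mathcal{D}$ of $K$-linear differential operators on $R=K[x]$ has $K$-basis $\{x^i\partial_t : i,t\geq 0\}$, and as a $K$-algebra it is generated by $x$ and the operators $\partial_{p^k}$, $k\geq 0$. The Bernstein filtration $\mathcal{F}_0\subset\mathcal{F}_1\subset\cdots$ of $\mathcal{D}$ is given by $\mathcal{F}_s=$ the $K$-span of $\{x^i\partial_t : i+t\leq s\}$. A $K$-filtration of a (left) $\mathcal{D}$-module $N$ is an ascending chain of $K$-subspaces $N_0\subset N_1\subset\cdots$ with $\bigcup_i N_i=N$ and $\mathcal{F}_iN_j\subset N_{i+j}$ for all $i,j$. A $\mathcal{D}$-module $N$ is holonomic if it has a $K$-filtration $\{N_i\}$ and a constant $C$ with $\dim_K N_i\leq C i$ for all $i$ (this is the definition with $n=1$ variable). The module: given elements $g_r\in R^{p^r}=K[x^{p^r}]$ ($r\geq 0$), put $\sigma_k=-\sum_{r=0}^k g_r$. Let $M^{(i)}$ be the free $R^{p^i}$-module on $s_1^{(i)},s_2^{(i)}$ and $\Theta_i:M^{(i+1)}\to M^{(i)}$ the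 $R^{p^{i+1}}$-linear map with $\Theta_i(s_1^{(i+1)})=s_1^{(i)}$, $\Theta_i(s_2^{(i+1)})=g_is_1^{(i)}+s_2^{(i)}$. The induced maps give $R$-module isomorphisms $R\otimes_{R^{p^s}}M^{(s)}\cong M^{(0)}$, and the natural action of $\mathrm{End}_{R^{p^s}}(R)$ (the operators of order $<p^s$) on $R\otimes_{R^{p^s}}M^{(s)}$ transfers to $M^{(0)}$; these actions are compatible and give $M=M^{(0)}=R\oplus R$ a $\mathcal{D}$-module structure. Concretely, $x$ acts coordinatewise and for all $k\geq 0$ and $f_1,f_2\in R$, $\partial_{p^k}(f_1,f_2)=\big(\partial_{p^k}f_1+(\partial_{p^k}\sigma_k)f_2,\ \partial_{p^k}f_2\big)$. *)

theory Defs
  imports "HOL-Computational_Algebra.Polynomial" "HOL-Library.Product_Plus"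
begin

definition hasse :: "nat \<Rightarrow> 'a::field poly \<Rightarrow> 'a poly" where
  "hasse t f = (\<Sum>v\<le>degree f. monom (of_nat (v choose t) * coeff f v) (v - t))"

definition perfect_char_p :: "'a::field itself \<Rightarrow> bool" where
  "perfect_char_p _ \<longleftrightarrow> CHAR('a) > 0 \<and> (\<forall>y::'a. \<exists>z. z ^ CHAR('a) = y)"

type_synonym 'a modM = "'a poly \<times> 'a poly"

definition scaleM :: "'a::field \<Rightarrow> 'a modM \<Rightarrow> 'a modM" where
  "scaleM c m = (smult c (fst m), smult c (snd m))"

lemma vector_space_scaleM: "vector_space (scaleM :: 'a::field \<Rightarrow> 'a modM \<Rightarrow> 'a modM)"
  by unfold_locales (auto simp: scaleM_def smult_add_right smult_add_left)

definition gfun :: "'a::field itself \<Rightarrow> nat \<Rightarrow> 'a poly" where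
  "gfun _ r = monom 1 (CHAR('a) ^ r + CHAR('a) ^ (2 * r))"

text \<open>S s = g_0 + ... + g_(s-1)  (= - sigma_(s-1)).  The images of the basis
 s_1^(s), s_2^(s) of M^(s) in M = M^(0) are (1,0) and (S s, 1).\<close>
definition Ssum :: "(nat \<Rightarrow> 'a::field poly) \<Rightarrow> nat \<Rightarrow> 'a poly" where
  "Ssum g s = (\<Sum>r<s. g r)"

text \<open>Action of partial_t on M, obtained from the identification
 R \<otimes>_{R^(p^s)} M^(s) = M with s = t (so p^s > t): writing
 (f1,f2) = (f1 - f2 S) * (1,0) + f2 * (S,1), the operator acts on the R-coefficients.\<close>
definition dact :: "(nat \<Rightarrow> 'a::field poly) \<Rightarrow> nat \<Rightarrow> 'a modM \<Rightarrow> 'a modM" where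
  "dact g t m = (let S = Ssum g t; f1 = fst m; f2 = snd m in
      (hasse t (f1 - f2 * S) + S * hasse t f2, hasse t f2))"

definition xdact :: "(nat \<Rightarrow> 'a::field poly) \<Rightarrow> nat \<Rightarrow> nat \<Rightarrow> 'a modM \<Rightarrow> 'a modM" where
  "xdact g i t m = (monom 1 i * fst (dact g t m), monom 1 i * snd (dact g t m))"

text \<open>A K-filtration N_0 \<subseteq> N_1 \<subseteq> ... of K-subspaces exhausting M with
 F_i N_j \<subseteq> N_(i+j); since N_(i+j) is a subspace and F_i is spanned by the
 x^a partial_t with a + t \<le> i, the latter condition is stated on these generators.\<close>
definition K_filtration :: "(nat \<Rightarrow> 'a::field poly) \<Rightarrow> (nat \<Rightarrow> 'a modM set) \<Rightarrow> bool" where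
  "K_filtration g N \<longleftrightarrow>
     (\<forall>i. module.subspace scaleM (N i)) \<and>
     (\<forall>i. N i \<subseteq> N (Suc i)) \<and>
     (\<Union>i. N i) = UNIV \<and>
     (\<forall>i j a t m. a + t \<le> i \<longrightarrow> m \<in> N j \<longrightarrow> xdact g a t m \<in> N (i + j))"

definition holonomic :: "(nat \<Rightarrow> 'a::field poly) \<Rightarrow> bool" where
  "holonomic g \<longleftrightarrow> (\<exists>N C. K_filtration g N \<and>
     (\<forall>i. (\<exists>B. finite B \<and> module.span scaleM B = N i) \<and>
          real (vector_space.dim scaleM (N i)) \<le> C * real i))"

end

theory Submission imports Defs "HOL-Computational_Algebra.Primes" begin

lemma coeff_hasse: "coeff (hasse t f) d = of_nat ((d+t) choose t) * coeff f (d+t)"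
proof -
  have "coeff (hasse t f) d = (\<Sum>v\<le>degree f. (if v = d + t then of_nat (v choose t) * coeff f v else 0))"
    unfolding hasse_def coeff_sum coeff_monom
  proof (rule sum.cong[OF refl])
    fix v assume "v \<in> {..degree f}"
    show "(if v - t = d then of_nat (v choose t) * coeff f v else 0) =
          (if v = d + t then of_nat (v choose t) * coeff f v else 0)"
      by (cases "v < t") (auto simp: binomial_eq_0)
  qed
  also have "\<dots> = of_nat ((d+t) choose t) * coeff f (d+t)"
    by (auto simp: sum.delta coeff_eq_0)
  finally show ?thesis .
qed

lemma binom_char:
  assumes "CHAR('a::field) > 0"
  shows "(of_nat ((CHAR('a)^r + CHAR('a)^(2*r)) choose e) :: 'a) =
     (if e = 0 then 1 else 0) + (if e = CHAR('a)^r then 1 else 0)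
     + (if e = CHAR('a)^(2*r) then 1 else 0) + (if e = CHAR('a)^r + CHAR('a)^(2*r) then 1 else 0)"
proof -
  define p where "p = CHAR('a)"
  have pr: "prime CHAR('a poly)" using prime_CHAR_semidom assms by simp
  define n where "n = p^r + p^(2*r)"
  have X: "[:1,1:] = (1::'a poly) + monom 1 1"
    by (rule poly_eqI) (simp add: coeff_pCons monom_altdef split: nat.split)
  have fd: "\<And>m. (1 + monom 1 1 :: 'a poly) ^ (p^m) = 1 + monom 1 (p^m)"
    using freshmans_dream'[OF pr, of "p^_"] by (simp add: p_def monom_altdef power_mult)
  have "([:1,1:] :: 'a poly) ^ n = (1 + monom 1 (p^r)) * (1 + monom 1 (p^(2*r)))"
    unfolding n_def power_add X fd ..
  also have "\<dots> = 1 + monom 1 (p^r) + monom 1 (p^(2*r)) + monom 1 n"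
    by (simp add: algebra_simps mult_monom n_def)
  finally have eq: "([:1,1:] :: 'a poly) ^ n = 1 + monom 1 (p^r) + monom 1 (p^(2*r)) + monom 1 n" .
  show ?thesis
  proof (cases "e \<le> n")
    case True
    have "(of_nat (n choose e) :: 'a) = coeff (([:1,1:] :: 'a poly) ^ n) e"
      using coeff_linear_poly_power[OF True, of "1::'a" 1] by simp
    also have "\<dots> = (if e = 0 then 1 else 0) + (if e = p^r then 1 else 0) + (if e = p^(2*r) then 1 else 0) + (if e = n then 1 else 0)" unfolding eq by (simp add: coeff_1)
    finally show ?thesis unfolding n_def p_def by simp
  next
    case False
    have "p^r \<le> n" "p^(2*r) \<le> n" unfolding n_def by auto
    with False show ?thesis unfolding n_def p_def by (auto simp: binomial_eq_0)
  qed
qed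

lemma nexp_inj:
  fixes p :: nat assumes "p \<ge> 2"
  shows "p^r + p^(2*r) = p^r' + p^(2*r') \<longleftrightarrow> r = r'"
proof -
  have "strict_mono (\<lambda>r. p^r + p^(2*r))"
    using mult_le_mono[OF assms assms] unfolding strict_mono_Suc_iff using assms by (auto intro!: add_strict_mono simp: power_strict_increasing_iff)
  thus ?thesis by (auto dest: strict_mono_eq)
qed

lemma less_pow: fixes p :: nat assumes "p \<ge> 2" shows "k < p^k"
proof -
  have "k < 2^k" by (rule less_exp)
  also have "\<dots> \<le> p^k" using assms by (simp add: power_mono)
  finally show ?thesis .
qed

lemma coeff_Ssum:
  assumes "CHAR('a::field) \<ge> 2"
  shows "coeff (Ssum (gfun TYPE('a)) t) e = (if \<exists>r<t. CHAR('a)^r + CHAR('a)^(2*r) = e then 1 else (0::'a))"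
proof (cases "\<exists>r<t. CHAR('a)^r + CHAR('a)^(2*r) = e")
  case True
  then obtain r0 where r0: "r0 < t" "CHAR('a)^r0 + CHAR('a)^(2*r0) = e" by blast
  have "coeff (Ssum (gfun TYPE('a)) t) e = (\<Sum>r<t. (if r = r0 then 1 else 0))"
    unfolding Ssum_def gfun_def coeff_sum coeff_monom
    by (rule sum.cong) (use r0 nexp_inj[OF assms] in auto)
  also have "\<dots> = 1" using r0 by simp
  finally show ?thesis using True by simp
next
  case False
  thus ?thesis unfolding Ssum_def gfun_def coeff_sum coeff_monom by auto
qed

lemma key1:
  assumes "CHAR('a::field) \<ge> 2" "k \<ge> 1"
  shows "coeff (hasse (CHAR('a)^k) (Ssum (gfun TYPE('a)) (CHAR('a)^k))) (CHAR('a)^(2*k)) = 1"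
proof -
  define p where "p = CHAR('a)"
  have p2: "p \<ge> 2" using assms p_def by simp
  have kk: "k < p^k" by (rule less_pow[OF p2])
  have P: "p^(2*k) = p^k * p^k" by (simp add: power_mult_distrib mult_2 power_add)
  have P2: "p^k \<ge> 2" using p2 assms(2)
    by (metis power_one_right power_increasing le_trans order_less_imp_le one_le_numeral p2 less_le_trans one_less_numeral_iff semiring_norm(76))
  have "p^k < p^(2*k)" unfolding P using P2 p2 by simp
  hence c: "(of_nat ((p^k + p^(2*k)) choose (p^k)) :: 'a) = 1"
    using binom_char[of k "p^k", where 'a='a] p2 unfolding p_def by auto
  show ?thesis
    unfolding coeff_hasse coeff_Ssum[OF assms(1)] p_def[symmetric]
    using kk c by (auto simp: add.commute)
qed

lemma key2:
  assumes "CHAR('a::field) \<ge> 2" "k \<ge> 1" "d > CHAR('a)^(2*k)"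
  shows "coeff (hasse (CHAR('a)^k) (Ssum (gfun TYPE('a)) (CHAR('a)^k))) d = 0"
proof -
  define p where "p = CHAR('a)"
  have p2: "p \<ge> 2" using assms p_def by simp
  have P: "p^(2*k) = p^k * p^k" by (simp add: power_mult_distrib mult_2 power_add)
  have Pk: "p^k \<le> p^(2*k)" using p2 by (simp add: power_increasing)
  have "(of_nat ((d + p^k) choose (p^k)) :: 'a) = 0" if r: "p^r + p^(2*r) = d + p^k" for r
  proof -
    have "p^k \<noteq> p^r"
    proof
      assume "p^k = p^r"
      hence "k = r" using p2 by (simp add: power_inject_exp)
      thus False using r assms(3) p_def by simp
    qed
    moreover have "p^k \<noteq> p^(2*r)"
    proof
      assume h: "p^k = p^(2*r)"
      have "p^r \<le> p^(2*r)" using p2 by (simp add: power_increasing)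
      thus False using h r assms(3) p_def Pk by simp
    qed
    moreover have "p^k \<noteq> p^r + p^(2*r)" using r assms(3) p_def by simp
    moreover have "p^k \<noteq> 0" using p2 by simp
    moreover have e: "d + p^k = p^r + p^(2*r)" using r by simp
    ultimately show ?thesis
      using binom_char[of r "p^k", where 'a='a] p2 unfolding e unfolding p_def by simp
  qed
  thus ?thesis
    unfolding coeff_hasse coeff_Ssum[OF assms(1)] p_def[symmetric]
    by auto
qed

lemma hasse_one: "t \<ge> 1 \<Longrightarrow> hasse t 1 = 0"
  by (rule poly_eqI) (simp add: coeff_hasse coeff_1)

lemma elem:
  fixes a :: nat
  assumes "CHAR('a::field) \<ge> 2" "k \<ge> 1"
  defines "v \<equiv> xdact (gfun TYPE('a)) a (CHAR('a)^k) (0,1)"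
  shows "snd v = 0" "degree (fst v) = a + CHAR('a)^(2*k)" "fst v \<noteq> 0"
proof -
  define p where "p = CHAR('a)"
  define S where "S = Ssum (gfun TYPE('a)) (p^k)"
  have t1: "p^k \<ge> 1" using assms p_def by simp
  have fv: "fst v = monom 1 a * hasse (p^k) (- S)" and sv: "snd v = monom 1 a * hasse (p^k) 1"
    unfolding v_def xdact_def dact_def Let_def p_def[symmetric] S_def[symmetric]
    by (simp_all add: hasse_one[OF t1])
  show "snd v = 0" using sv hasse_one[OF t1] by simp
  have cf: "coeff (fst v) e = (if e < a then 0 else - coeff (hasse (p^k) S) (e - a))" for e
    unfolding fv coeff_monom_mult coeff_hasse by simp
  have c1: "coeff (fst v) (a + p^(2*k)) = -1"
    unfolding cf using key1[OF assms(1,2)] unfolding p_def[symmetric] S_def[symmetric] by simp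
  have c2: "coeff (fst v) e = 0" if "e > a + p^(2*k)" for e
    unfolding cf using key2[OF assms(1,2), of "e - a"] that unfolding p_def[symmetric] S_def[symmetric] by simp
  show "fst v \<noteq> 0" using c1 by auto
  have "degree (fst v) \<le> a + p^(2*k)" by (rule degree_le) (use c2 in auto)
  moreover have "a + p^(2*k) \<le> degree (fst v)" by (rule le_degree) (use c1 in simp)
  ultimately show "degree (fst v) = a + CHAR('a)^(2*k)" unfolding p_def by simp
qed

lemma fst_scaleM: "fst (scaleM c m) = smult c (fst m)" by (simp add: scaleM_def)

lemma indep_deg:
  fixes S :: "'a::field modM set"
  assumes nz: "\<forall>v\<in>S. fst v \<noteq> 0" and inj: "inj_on (\<lambda>v. degree (fst v)) S"
  shows "\<not> module.dependent scaleM S"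
proof -
  interpret vector_space "scaleM :: 'a \<Rightarrow> 'a modM \<Rightarrow> 'a modM" by (rule vector_space_scaleM)
  show ?thesis
  proof (rule ccontr)
    assume "\<not> \<not> dependent S"
    then obtain t u where t: "finite t" "t \<subseteq> S" "(\<Sum>v\<in>t. scaleM (u v) v) = 0" "\<exists>v\<in>t. u v \<noteq> 0"
      unfolding dependent_explicit by blast
    define t' where "t' = {v\<in>t. u v \<noteq> 0}"
    have ft': "finite t'" "t' \<noteq> {}" using t unfolding t'_def by auto
    define m where "m = Max ((\<lambda>v. degree (fst v)) ` t')"
    have "m \<in> (\<lambda>v. degree (fst v)) ` t'" unfolding m_def using ft' by (intro Max_in) auto
    then obtain w where w1: "w \<in> t'" "degree (fst w) = m" by blast
    have w: "w \<in> t'" "\<forall>v\<in>t'. degree (fst v) \<le> degree (fst w)"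
      using w1 ft' unfolding m_def by auto
    have "coeff (fst (\<Sum>v\<in>t. scaleM (u v) v)) (degree (fst w)) = 0" using t(3) by simp
    moreover have "coeff (fst (\<Sum>v\<in>t. scaleM (u v) v)) (degree (fst w)) =
        (\<Sum>v\<in>t. u v * coeff (fst v) (degree (fst w)))"
      by (simp add: fst_sum fst_scaleM coeff_sum)
    moreover have "(\<Sum>v\<in>t. u v * coeff (fst v) (degree (fst w))) =
        (\<Sum>v\<in>t. if v = w then u w * lead_coeff (fst w) else 0)"
    proof (rule sum.cong[OF refl])
      fix v assume v: "v \<in> t"
      show "u v * coeff (fst v) (degree (fst w)) = (if v = w then u w * lead_coeff (fst w) else 0)"
      proof (cases "v = w \<or> u v = 0")
        case True thus ?thesis by auto
      next
        case False
        hence "v \<in> t'" using v unfolding t'_def by auto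
        hence le: "degree (fst v) \<le> degree (fst w)" using w by auto
        have "degree (fst v) \<noteq> degree (fst w)"
          using inj False w(1) \<open>v \<in> t'\<close> t(2) unfolding t'_def inj_on_def by blast
        hence "coeff (fst v) (degree (fst w)) = 0" using le by (intro coeff_eq_0) simp
        thus ?thesis using False by simp
      qed
    qed
    moreover have "w \<in> t" "u w \<noteq> 0" using w(1) unfolding t'_def by auto
    moreover have "lead_coeff (fst w) \<noteq> 0" using nz \<open>w \<in> t\<close> t(2) by auto
    ultimately show False using t(1) by (simp add: sum.delta')
  qed
qed

lemma card_le_dim:
  fixes B T :: "'a::field modM set"
  assumes "finite B" "module.span scaleM B = V" "T \<subseteq> V" "\<not> module.dependent scaleM T"
  shows "card T \<le> vector_space.dim scaleM V"
proof -
  interpret vector_space "scaleM :: 'a \<Rightarrow> 'a modM \<Rightarrow> 'a modM" by (rule vector_space_scaleM)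
  obtain A where A: "A \<subseteq> V" "independent A" "V \<subseteq> span A" "card A = dim V"
    by (rule basis_exists)
  have "finite A" using independent_span_bound[OF assms(1) A(2)] A(1) assms(2) by auto
  thus ?thesis using independent_span_bound[OF _ assms(4), of A] A assms(3) by auto
qed

lemma inj_deg_aux:
  fixes p :: nat assumes p: "p \<ge> 2" and a: "a < p^(2*k)" and lt: "k < k'"
  shows "a + p^(2*k) < a' + p^(2*k')"
proof -
  have "p^(2*k+2) \<le> p^(2*k')" using lt p by (intro power_increasing) auto
  moreover have "p^(2*k+2) = p^(2*k) * (p*p)" by (simp add: power_add power2_eq_square)
  moreover have "p*p \<ge> 2" using mult_le_mono[OF p p] by simp
  ultimately have "2 * p^(2*k) \<le> p^(2*k')"
    by (metis le_trans mult.commute mult_le_mono2)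
  thus ?thesis using a by simp
qed

lemma inj_deg:
  fixes p :: nat assumes p: "p \<ge> 2" and a: "a < p^(2*k)" and a': "a' < p^(2*k')"
    and e: "a + p^(2*k) = a' + p^(2*k')"
  shows "k = k' \<and> a = a'"
proof -
  have "\<not> k < k'" using inj_deg_aux[OF p a, of k' a'] e by (metis less_irrefl)
  moreover have "\<not> k' < k" using inj_deg_aux[OF p a', of k a] e by (metis less_irrefl)
  ultimately show ?thesis using e by simp
qed

theorem mainTheorem1:
  assumes "perfect_char_p TYPE('a::field)"
  shows "\<not> holonomic (gfun TYPE('a))"
proof
  define g where "g = gfun TYPE('a)"
  define p where "p = CHAR('a)"
  have "CHAR('a) > 0" using assms unfolding perfect_char_p_def by simp
  hence "prime CHAR('a)" by (rule prime_CHAR_semidom)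
  hence p2: "p \<ge> 2" unfolding p_def using prime_ge_2_nat by blast
  have P2: "CHAR('a) \<ge> 2" using p2 p_def by simp
  assume "holonomic (gfun TYPE('a))"
  then obtain N C where KF: "K_filtration g N" and
    H: "\<And>i. (\<exists>B. finite B \<and> module.span scaleM B = N i) \<and> real (vector_space.dim scaleM (N i)) \<le> C * real i"
    unfolding holonomic_def g_def by blast
  have "((0::'a poly), (1::'a poly)) \<in> (\<Union>i. N i)" using KF unfolding K_filtration_def by simp
  then obtain j where j: "((0::'a poly), (1::'a poly)) \<in> N j" by blast
  have filt: "\<And>i a t. a + t \<le> i \<Longrightarrow> xdact g a t (0,1) \<in> N (i + j)"
    using KF j unfolding K_filtration_def by blast
  define K where "K = j + nat \<lceil>2*C*real p\<rceil> + 1"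
  define Q where "Q = p^(2*K-1)"
  define X where "X = p^(2*K)"
  define I where "I = {K..<2*K} \<times> {..<Q}"
  define \<phi> where "\<phi> = (\<lambda>(k,a). xdact g a (p^k) (0,1))"
  have K1: "K \<ge> 1" unfolding K_def by simp
  have XQ: "X = p * Q" unfolding X_def Q_def using K1
    by (metis Suc_diff_1 mult_pos_pos nat_0_less_mult_iff power_Suc zero_less_numeral less_le_trans zero_less_one)
  have Qpos: "Q > 0" unfolding Q_def using p2 by simp
  have sub: "\<phi> ` I \<subseteq> N (X + j)"
  proof
    fix v assume "v \<in> \<phi> ` I"
    then obtain x where x: "x \<in> I" "v = \<phi> x" by blast
    obtain k a where "x = (k,a)" by (cases x) auto
    hence ka: "(k,a) \<in> I" "v = \<phi> (k,a)" using x by auto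
    have "p^k \<le> Q" unfolding Q_def using ka(1) p2 unfolding I_def by (intro power_increasing) auto
    moreover have "a < Q" using ka(1) unfolding I_def by auto
    moreover have "2 * Q \<le> X" using XQ p2 by simp
    ultimately have "a + p^k \<le> X" by simp
    thus "v \<in> N (X + j)" using filt ka(2) unfolding \<phi>_def by simp
  qed
  have deg: "degree (fst (\<phi> (k,a))) = a + p^(2*k)" "fst (\<phi> (k,a)) \<noteq> 0" if "(k,a) \<in> I" for k a
  proof -
    have "k \<ge> 1" using that K1 unfolding I_def by auto
    thus "degree (fst (\<phi> (k,a))) = a + p^(2*k)" "fst (\<phi> (k,a)) \<noteq> 0"
      using elem[OF P2, of k a] unfolding \<phi>_def g_def p_def by auto
  qed
  have small: "a < p^(2*k)" if "(k,a) \<in> I" for k a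
  proof -
    have "Q \<le> p^(2*k)" unfolding Q_def using that p2 unfolding I_def by (intro power_increasing) auto
    thus ?thesis using that unfolding I_def by auto
  qed
  have injd: "inj_on (\<lambda>x. degree (fst (\<phi> x))) I"
  proof (rule inj_onI)
    fix x y assume xy: "x \<in> I" "y \<in> I" "degree (fst (\<phi> x)) = degree (fst (\<phi> y))"
    obtain k a k' a' where "x = (k,a)" "y = (k',a')" by (cases x, cases y) auto
    thus "x = y" using xy deg small inj_deg[OF p2, of a k a' k'] by auto
  qed
  hence injphi: "inj_on \<phi> I" unfolding inj_on_def by metis
  have "inj_on (\<lambda>v. degree (fst v)) (\<phi> ` I)"
  proof (rule inj_onI)
    fix v w assume vw: "v \<in> \<phi> ` I" "w \<in> \<phi> ` I" "degree (fst v) = degree (fst w)"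
    then obtain x y where "x \<in> I" "y \<in> I" "v = \<phi> x" "w = \<phi> y" by blast
    thus "v = w" using injd vw(3) unfolding inj_on_def by metis
  qed
  hence indep: "\<not> module.dependent scaleM (\<phi> ` I)"
    by (intro indep_deg) (use deg in auto)
  obtain B where B: "finite B" "module.span scaleM B = N (X + j)" using H by blast
  have "card (\<phi> ` I) \<le> vector_space.dim scaleM (N (X + j))"
    by (rule card_le_dim[OF B sub indep])
  moreover have "card (\<phi> ` I) = K * Q"
    using card_image[OF injphi] unfolding I_def by simp
  ultimately have ineq: "real (K * Q) \<le> C * real (X + j)" using H[of "X + j"] by linarith
  have "j < p^j" by (rule less_pow[OF p2])
  also have "\<dots> \<le> X" unfolding X_def using p2 by (intro power_increasing) (auto simp: K_def)
  finally have jX: "j < X" .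
  have "real (nat \<lceil>2*C*real p\<rceil>) \<ge> 2*C*real p" by linarith
  hence Kgt: "real K > 2*C*real p" unfolding K_def by simp
  show False
  proof (cases "C \<le> 0")
    case True
    have "C * real (X + j) \<le> 0" using True by (simp add: mult_nonpos_nonneg)
    moreover have "real (K*Q) > 0" using K1 Qpos by simp
    ultimately show False using ineq by linarith
  next
    case False
    have "C * real (X + j) \<le> C * (2 * real X)" using False jX by (intro mult_left_mono) auto
    also have "\<dots> = (2 * C * real p) * real Q" using XQ by simp
    also have "\<dots> < real K * real Q" using Kgt Qpos by (intro mult_strict_right_mono) auto
    finally show False using ineq by simp
  qed
qed

end
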